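(* Let $d\ge1$ and $\lambda=(\lambda_1,\dots,\lambda_d)$ a vector of positive integers with $\sum_t\lambda_t=n\ge2$. If $i\preceq j$ in $P(\lambda)$ (with $i,j\in\{0,\dots,n-2\}$), then also $j-i\preceq j$ in $P(\lambda)$.
   Context: $\Delta_\lambda=\mathrm{conv}(e_1,\dots,e_d,\lambda)\subset\mathbb{R}^d$, with fundamental parallelepiped $\Pi_\lambda=\{\sum_{i=1}^d\gamma_i(1,e_i)+\gamma_{d+1}(1,\lambda):0\le\gamma_i<1\}\subset\mathbb{R}^{d+1}$. The poset $P(\lambda)$ is the set $\Pi_\lambda\cap\mathbb{Z}^{d+1}$ ordered by $\sigma\preceq\mu$ iff $\mu-\sigma\in\Pi_\lambda\cap\mathbb{Z}^{d+1}$ (a reflexive relation). For $0\le b<n-1$ set $p(b)=\left(\sum_{t=1}^d\lceil b\lambda_t/(n-1)\rceil-b,\ \lceil b\lambda_1/(n-1)\rceil,\dots,\lceil b\lambda_d/(n-1)\rceil\right)$; $b\mapsto p(b)$ is a bijection from $\{0,\dots,n-2\}$ onto $\Pi_\lambda\cap\mathbb{Z}^{d+1}$, and each integer $b$ is identified with $p(b)$, so $P(\lambda)$ is a partial order on $\{0,\dots,n-2\}$. *)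

theory Defs
  imports Complex_Main
begin

text \<open>Vectors in Z^(d+1) are functions nat => int, coordinates 0..d
  (coordinate 0 is the first, "height" coordinate). lam is indexed by 1..d.\<close>

definition lam_n :: "nat \<Rightarrow> (nat \<Rightarrow> nat) \<Rightarrow> nat" where
  "lam_n d lam = (\<Sum>t=1..d. lam t)"

definition in_Pi :: "nat \<Rightarrow> (nat \<Rightarrow> nat) \<Rightarrow> (nat \<Rightarrow> int) \<Rightarrow> bool" where
  "in_Pi d lam w \<longleftrightarrow>
     (\<exists>\<gamma> :: nat \<Rightarrow> real.
        (\<forall>i\<in>{1..d+1}. 0 \<le> \<gamma> i \<and> \<gamma> i < 1) \<and>
        real_of_int (w 0) = (\<Sum>i=1..d+1. \<gamma> i) \<and>
        (\<forall>t\<in>{1..d}. real_of_int (w t) = \<gamma> t + \<gamma> (d+1) * real (lam t)))"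

definition pt :: "nat \<Rightarrow> (nat \<Rightarrow> nat) \<Rightarrow> nat \<Rightarrow> (nat \<Rightarrow> int)" where
  "pt d lam b = (\<lambda>k.
     if k = 0 then (\<Sum>t=1..d. \<lceil>real (b * lam t) / real (lam_n d lam - 1)\<rceil>) - int b
     else if k \<le> d then \<lceil>real (b * lam k) / real (lam_n d lam - 1)\<rceil>
     else 0)"

text \<open>The order of P(lam), transported to {0..n-2} via b |-> p(b):
  i precedes j iff p(j) - p(i) lies in Pi_lam (it is automatically integral).\<close>
definition P_le :: "nat \<Rightarrow> (nat \<Rightarrow> nat) \<Rightarrow> nat \<Rightarrow> nat \<Rightarrow> bool" where
  "P_le d lam i j \<longleftrightarrow> in_Pi d lam (\<lambda>k. pt d lam j k - pt d lam i k)"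

end

theory Submission
  imports Defs
begin

lemma ceil_key:
  fixes x y :: real
  assumes "0 \<le> real_of_int (\<lceil>x+y\<rceil> - \<lceil>y\<rceil>) - x"
  shows "0 \<le> real_of_int (\<lceil>x+y\<rceil> - \<lceil>x\<rceil>) - y \<and> real_of_int (\<lceil>x+y\<rceil> - \<lceil>x\<rceil>) - y < 1"
proof -
  define k where "k = \<lceil>x+y\<rceil> - \<lceil>x\<rceil> - \<lceil>y\<rceil>"
  have "\<lceil>x+y\<rceil> \<le> \<lceil>x\<rceil> + \<lceil>y\<rceil>" by (rule ceiling_add_le)
  hence k1: "k \<le> 0" unfolding k_def by simp
  have "real_of_int \<lceil>x\<rceil> < x + 1" by linarith
  hence "real_of_int k > -1" using assms unfolding k_def by simp
  hence "k \<ge> 0" by simp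
  hence "k = 0" using k1 by simp
  hence "\<lceil>x+y\<rceil> - \<lceil>x\<rceil> = \<lceil>y\<rceil>" unfolding k_def by simp
  thus ?thesis by simp linarith
qed

theorem proposition2p14:
  fixes d :: nat and lam :: "nat \<Rightarrow> nat" and i j :: nat
  assumes "d \<ge> 1"
    and "\<forall>t\<in>{1..d}. lam t > 0"
    and "lam_n d lam \<ge> 2"
    and "i \<le> lam_n d lam - 2" and "j \<le> lam_n d lam - 2"
    and "P_le d lam i j"
  shows "P_le d lam (j - i) j"
proof -
  define N where "N = real (lam_n d lam - 1)"
  have Npos: "N > 0" using assms(3) unfolding N_def by simp
  have Nsum: "N = (\<Sum>t=1..d. real (lam t)) - 1"
    using assms(3) unfolding N_def lam_n_def by (simp add: of_nat_diff)
  define c where "c = (\<lambda>b t. \<lceil>real (b * lam t) / N\<rceil>)"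
  have pt0: "pt d lam b 0 = (\<Sum>t=1..d. c b t) - int b" for b
    unfolding pt_def c_def N_def by simp
  have ptt: "t \<in> {1..d} \<Longrightarrow> pt d lam b t = c b t" for b t
    unfolding pt_def c_def N_def by simp
  have spl: "(\<Sum>k=1..d+1. g k) = (\<Sum>k=1..d. g k) + g (d+1)" for g :: "nat \<Rightarrow> real"
    by simp
  from assms(6) obtain \<gamma> :: "nat \<Rightarrow> real" where
    g1: "\<forall>k\<in>{1..d+1}. 0 \<le> \<gamma> k \<and> \<gamma> k < 1" and
    g2: "real_of_int (pt d lam j 0 - pt d lam i 0) = (\<Sum>k=1..d+1. \<gamma> k)" and
    g3: "\<forall>t\<in>{1..d}. real_of_int (pt d lam j t - pt d lam i t) = \<gamma> t + \<gamma> (d+1) * real (lam t)"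
    unfolding P_le_def in_Pi_def by blast
  have g3': "\<forall>t\<in>{1..d}. real_of_int (c j t - c i t) = \<gamma> t + \<gamma> (d+1) * real (lam t)"
    using g3 ptt by simp
  have "(\<Sum>t=1..d. real_of_int (c j t - c i t)) = (\<Sum>t=1..d. \<gamma> t + \<gamma> (d+1) * real (lam t))"
    using g3' by (intro sum.cong) auto
  also have "\<dots> = (\<Sum>t=1..d. \<gamma> t) + \<gamma> (d+1) * (\<Sum>t=1..d. real (lam t))"
    by (simp add: sum.distrib sum_distrib_left)
  finally have S1: "(\<Sum>t=1..d. real_of_int (c j t - c i t)) = (\<Sum>t=1..d. \<gamma> t) + \<gamma> (d+1) * (N + 1)"
    using Nsum by simp
  have S2: "(\<Sum>t=1..d. real_of_int (c j t - c i t)) - real j + real i = (\<Sum>t=1..d. \<gamma> t) + \<gamma> (d+1)"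
    using g2 unfolding pt0 spl by (simp add: sum_subtractf)
  have gN: "\<gamma> (d+1) * N = real j - real i" using S1 S2 by (simp add: algebra_simps)
  have "\<gamma> (d+1) \<ge> 0" using g1 by simp
  hence ij: "i \<le> j" using gN Npos
    by (metis diff_ge_0_iff_ge of_nat_le_iff zero_le_mult_iff linorder_not_le less_eq_real_def)
  have gd: "\<gamma> (d+1) = (real j - real i) / N" using gN Npos by (simp add: field_simps)
  have key: "0 \<le> real_of_int (c j t - c (j-i) t) - real (i * lam t) / N \<and>
             real_of_int (c j t - c (j-i) t) - real (i * lam t) / N < 1" if t: "t \<in> {1..d}" for t
  proof -
    define x where "x = real ((j-i) * lam t) / N"
    define y where "y = real (i * lam t) / N"
    have xy: "x + y = real (j * lam t) / N" unfolding x_def y_def using ij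
      by (simp add: of_nat_diff add_divide_distrib[symmetric] algebra_simps)
    have cj: "c j t = \<lceil>x+y\<rceil>" using xy unfolding c_def by simp
    have ci: "c i t = \<lceil>y\<rceil>" unfolding c_def y_def by simp
    have cji: "c (j-i) t = \<lceil>x\<rceil>" unfolding c_def x_def by simp
    have "0 \<le> \<gamma> t" using g1 t by simp
    moreover have "\<gamma> t = real_of_int (c j t - c i t) - x"
      using g3' t gd unfolding x_def using ij by (simp add: of_nat_diff algebra_simps)
    ultimately have "0 \<le> real_of_int (\<lceil>x+y\<rceil> - \<lceil>y\<rceil>) - x" using cj ci by simp
    from ceil_key[OF this] show ?thesis using cj cji y_def by simp
  qed
  define \<delta> where "\<delta> = (\<lambda>k. if k = d+1 then real i / N
      else real_of_int (c j k - c (j-i) k) - real (i * lam k) / N)"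
  have i_lt: "real i < N" using assms(3,4) unfolding N_def by linarith
  have "(\<Sum>k=1..d. \<delta> k) = (\<Sum>k=1..d. real_of_int (c j k - c (j-i) k)) - (\<Sum>k=1..d. real (i * lam k) / N)"
    unfolding \<delta>_def by (simp add: sum_subtractf)
  also have "(\<Sum>k=1..d. real (i * lam k) / N) = real i * (N + 1) / N"
    using Nsum by (simp add: sum_divide_distrib[symmetric] sum_distrib_left[symmetric])
  finally have sd: "(\<Sum>k=1..d. \<delta> k) + \<delta> (d+1) = (\<Sum>k=1..d. real_of_int (c j k - c (j-i) k)) - real i"
    unfolding \<delta>_def using Npos by (simp add: field_simps)
  show ?thesis
    unfolding P_le_def in_Pi_def
  proof (intro exI[of _ \<delta>] conjI ballI)
    fix k assume k: "k \<in> {1..d+1}"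
    show "0 \<le> \<delta> k" "\<delta> k < 1"
    proof -
      have "0 \<le> \<delta> k \<and> \<delta> k < 1"
      proof (cases "k = d+1")
        case True thus ?thesis unfolding \<delta>_def using Npos i_lt by simp
      next
        case False thus ?thesis using key[of k] k unfolding \<delta>_def by simp
      qed
      thus "0 \<le> \<delta> k" "\<delta> k < 1" by auto
    qed
  next
    show "real_of_int (pt d lam j 0 - pt d lam (j - i) 0) = (\<Sum>k=1..d+1. \<delta> k)"
      unfolding spl sd pt0 using ij by (simp add: sum_subtractf of_nat_diff)
  next
    fix t assume t: "t \<in> {1..d}"
    show "real_of_int (pt d lam j t - pt d lam (j - i) t) = \<delta> t + \<delta> (d+1) * real (lam t)"
      using t ptt unfolding \<delta>_def by auto
  qed
qed

end
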